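(* Let $\Theta\subset\mathbb{R}^n$ be a symmetric set and $C=\{X\in\mathbf{S}^n:\lambda(X)\in\Theta\}$. Then for any $X\in C$, $$T_C(X)=\{H\in\mathbf{S}^n:\ \lambda'(X;H)\in T_\Theta(\lambda(X))\}.$$
   Context: $\mathbf{S}^n$: real symmetric $n\times n$ matrices. $\lambda(X)$: eigenvalue vector in nonincreasing order. $\Theta$ symmetric: $P\Theta=\Theta$ for all permutation matrices $P$. Tangent cone: $T_C(\bar x)=\{w:\exists t_k\downarrow0,\ w_k\to w,\ \bar x+t_kw_k\in C\}$. $\lambda'(X;H)=\lim_{t\downarrow0}(\lambda(X+tH)-\lambda(X))/t$, which exists and equals $\big(\lambda(U_{\alpha_1}^\top HU_{\alpha_1}),\dots,\lambda(U_{\alpha_r}^\top HU_{\alpha_r})\big)$, where $\mu_1>\dots>\mu_r$ are the distinct eigenvalues of $X$, $\alpha_m=\{i:\lambda_i(X)=\mu_m\}$, $U$ is orthogonal with $X=U\mathrm{Diag}(\lambda(X))U^\top$ and $U_{\alpha_m}$ consists of the columns of $U$ indexed by $\alpha_m$. *)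

theory Defs
  imports "HOL-Analysis.Analysis"
begin

text \<open>Vectors in R^n are \<open>real ^ 'n\<close>, n x n matrices are \<open>real ^ 'n ^ 'n\<close>,
  where the finite index type 'n carries a linear order (needed to speak of
  "nonincreasing order").\<close>

definition sym_mats :: "(real ^ 'n ^ 'n) set" where
  "sym_mats = {X. transpose X = X}"

definition Diag :: "real ^ 'n \<Rightarrow> real ^ 'n ^ 'n" where
  "Diag d = (\<chi> i j. if i = j then d $ i else 0)"

definition perm_act :: "('n \<Rightarrow> 'n) \<Rightarrow> real ^ 'n \<Rightarrow> real ^ 'n" where
  "perm_act p x = (\<chi> i. x $ p i)"

definition symmetric_set :: "(real ^ 'n) set \<Rightarrow> bool" where
  "symmetric_set \<Theta> \<longleftrightarrow> (\<forall>p. p permutes (UNIV :: 'n set) \<longrightarrow> perm_act p ` \<Theta> = \<Theta>)"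

definition eigvec :: "real ^ ('n::{finite,linorder}) ^ ('n::{finite,linorder}) \<Rightarrow> real ^ ('n::{finite,linorder})" where
  "eigvec X = (THE d. (\<forall>i j. i \<le> j \<longrightarrow> d $ j \<le> d $ i) \<and>
       (\<exists>U. orthogonal_matrix U \<and> X = U ** Diag d ** transpose U))"

definition eigvec_dir :: "real ^ ('n::{finite,linorder}) ^ ('n::{finite,linorder}) \<Rightarrow> real ^ ('n::{finite,linorder}) ^ ('n::{finite,linorder}) \<Rightarrow> real ^ ('n::{finite,linorder})" where
  "eigvec_dir X H = Lim (at_right 0) (\<lambda>t. scaleR (1 / t) (eigvec (X + scaleR t H) - eigvec X))"

definition tangent_cone :: "'a::real_normed_vector set \<Rightarrow> 'a \<Rightarrow> 'a set" where
  "tangent_cone C x = {w. \<exists>t w'. (\<forall>k. t k > (0::real)) \<and> t \<longlonglongrightarrow> 0 \<and>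
       w' \<longlonglongrightarrow> w \<and> (\<forall>k. x + scaleR (t k) (w' k) \<in> C)}"

end

theory Submission
  imports Defs
begin


lemma sym_inner:
  fixes A :: "real^'n^'n"
  assumes "transpose A = A"
  shows "x \<bullet> (A *v y) = (A *v x) \<bullet> y"
  by (metis assms dot_lmul_matrix inner_commute transpose_matrix_vector)

lemma eigvec_in_subspace:
  fixes A :: "real^'n^'n"
  assumes symA: "transpose A = A" and S: "subspace S" and inv: "\<forall>x\<in>S. A *v x \<in> S"
    and ne: "S \<noteq> {0}"
  obtains v c where "v \<in> S" "norm v = 1" "A *v v = c *\<^sub>R v"
proof -
  let ?K = "S \<inter> sphere 0 1"
  have cK: "compact ?K"
    using compact_sphere[of "0::real^'n" 1] closed_subspace[OF S] by (metis Int_commute compact_Int_closed)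
  obtain x where x: "x \<in> S" "x \<noteq> 0" using ne S subspace_0 by blast
  have "x /\<^sub>R norm x \<in> ?K" using x S by (simp add: subspace_scale)
  then have neK: "?K \<noteq> {}" by blast
  have cont: "continuous_on ?K (\<lambda>x. x \<bullet> (A *v x))"
    by (intro continuous_intros)
  obtain v where v: "v \<in> ?K" and vmax: "\<And>y. y \<in> ?K \<Longrightarrow> y \<bullet> (A *v y) \<le> v \<bullet> (A *v v)"
    using continuous_attains_sup[OF cK neK cont] by blast
  define m where "m = v \<bullet> (A *v v)"
  have vS: "v \<in> S" and nv: "norm v = 1" using v by auto
  have vv: "v \<bullet> v = 1" using nv by (simp add: norm_eq_1)
  have hom: "y \<bullet> (A *v y) \<le> m * (y \<bullet> y)" if "y \<in> S" for y
  proof (cases "y = 0")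
    case True then show ?thesis by simp
  next
    case False
    then have "y /\<^sub>R norm y \<in> ?K" using that S by (simp add: subspace_scale)
    from vmax[OF this] have "(y /\<^sub>R norm y) \<bullet> (A *v (y /\<^sub>R norm y)) \<le> m" by (simp add: m_def)
    then have "(y \<bullet> (A *v y)) / (norm y)^2 \<le> m"
      by (simp add: matrix_vector_mult_scaleR inner_scaleR_left inner_scaleR_right power2_eq_square divide_inverse)
        (simp add: ac_simps)
    moreover have "(norm y)^2 = y \<bullet> y" by (simp add: power2_norm_eq_inner)
    moreover have "norm y > 0" using False by simp
    ultimately show ?thesis by (simp add: field_simps)
  qed
  have orth0: "w \<bullet> (A *v v) = 0" if wS: "w \<in> S" and wv: "w \<bullet> v = 0" for w
  proof (rule ccontr)
    define c where "c = w \<bullet> (A *v v)"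
    define K where "K = w \<bullet> (A *v w) - m * (w \<bullet> w)"
    assume "w \<bullet> (A *v v) \<noteq> 0"
    then have c0: "c \<noteq> 0" by (simp add: c_def)
    have ineq: "2 * s * c + s^2 * K \<le> 0" for s
    proof -
      have "v + s *\<^sub>R w \<in> S" using vS wS S by (simp add: subspace_add subspace_scale)
      from hom[OF this] have "(v + s *\<^sub>R w) \<bullet> (A *v (v + s *\<^sub>R w)) \<le> m * ((v + s *\<^sub>R w) \<bullet> (v + s *\<^sub>R w))" .
      moreover have "v \<bullet> (A *v w) = c"
        using sym_inner[OF symA, of v w] by (simp add: c_def inner_commute)
      ultimately show ?thesis
        using vv wv
        by (simp add: matrix_vector_right_distrib matrix_vector_mult_scaleR inner_add_left inner_add_right
            inner_scaleR_left inner_scaleR_right inner_commute[of w v] c_def K_def m_def power2_eq_square algebra_simps)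
    qed
    define s where "s = c / (\<bar>K\<bar> + 1)"
    have "2 * s * c + s^2 * K > 0"
    proof -
      have s0: "s * c > 0" using c0 by (simp add: s_def field_simps zero_less_mult_iff) linarith
      have "s^2 * K \<ge> - (s^2 * \<bar>K\<bar>)" 
      proof -
        have "- \<bar>K\<bar> \<le> K" by simp
        then have "s^2 * (- \<bar>K\<bar>) \<le> s^2 * K" by (rule mult_left_mono) simp
        then show ?thesis by simp
      qed
      moreover have "s^2 * \<bar>K\<bar> < s * c"
      proof -
        have "s^2 * \<bar>K\<bar> = s * c * (\<bar>K\<bar> / (\<bar>K\<bar> + 1))"
          by (simp add: s_def power2_eq_square field_simps)
        also have "\<dots> < s * c" using s0 by (simp add: field_simps)
        finally show ?thesis .
      qed
      ultimately show ?thesis using s0 by linarith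
    qed
    with ineq[of s] show False by simp
  qed
  define r where "r = A *v v - m *\<^sub>R v"
  have rS: "r \<in> S" using inv vS S by (simp add: r_def subspace_diff subspace_scale)
  have rv: "r \<bullet> v = 0"
  proof -
    have "r \<bullet> v = (A *v v) \<bullet> v - m * (v \<bullet> v)" by (simp add: r_def inner_diff_left)
    also have "\<dots> = 0" using vv by (simp add: m_def inner_commute)
    finally show ?thesis .
  qed
  have "r \<bullet> (A *v v) = 0" using orth0[OF rS rv] .
  moreover have "r \<bullet> (A *v v - m *\<^sub>R v) = r \<bullet> (A *v v) - m * (r \<bullet> v)"
    by (simp add: inner_diff_right)
  ultimately have "r \<bullet> r = 0" using rv by (simp add: r_def[symmetric])
  then have "A *v v = m *\<^sub>R v" by (simp add: r_def)
  then show ?thesis using that vS nv by blast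
qed

lemma eigbasis_subspace:
  fixes A :: "real^'n^'n"
  assumes symA: "transpose A = A"
  shows "subspace S \<Longrightarrow> (\<forall>x\<in>S. A *v x \<in> S) \<Longrightarrow> \<exists>B. B \<subseteq> S \<and> pairwise orthogonal B \<and>
     (\<forall>x\<in>B. norm x = 1) \<and> (\<forall>x\<in>B. \<exists>c. A *v x = c *\<^sub>R x) \<and> S \<subseteq> span B"
proof (induction "dim S" arbitrary: S rule: less_induct)
  case less
  show ?case
  proof (cases "S = {0}")
    case True
    then show ?thesis by (intro exI[of _ "{}"]) auto
  next
    case False
    obtain v c where vS: "v \<in> S" and nv: "norm v = 1" and ev: "A *v v = c *\<^sub>R v"
      using eigvec_in_subspace[OF symA less.prems False] by blast
    have vv: "v \<bullet> v = 1" using nv by (simp add: norm_eq_1)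
    define S' where "S' = S \<inter> {x. v \<bullet> x = 0}"
    have sS': "subspace S'" unfolding S'_def
      by (intro subspace_inter less.prems subspace_hyperplane)
    have invS': "\<forall>x\<in>S'. A *v x \<in> S'"
    proof
      fix x assume x: "x \<in> S'"
      have "v \<bullet> (A *v x) = (A *v v) \<bullet> x" by (rule sym_inner[OF symA])
      also have "\<dots> = 0" using x ev by (simp add: S'_def)
      finally show "A *v x \<in> S'" using x less.prems(2) by (simp add: S'_def)
    qed
    have "S' \<subset> S" using vS vv unfolding S'_def by (metis (mono_tags) Int_iff mem_Collect_eq psubsetI inf_le1 zero_neq_one)
    moreover have e1: "span S' = S'" using sS' span_eq_iff by blast
    moreover have e2: "span S = S" using less.prems(1) span_eq_iff by blast
    ultimately have "span S' \<subset> span S" by (simp only: e1 e2)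
    then have "dim S' < dim S" by (rule dim_psubset)
    from less.hyps[OF this sS' invS'] obtain B' where B': "B' \<subseteq> S'" "pairwise orthogonal B'"
      "\<forall>x\<in>B'. norm x = 1" "\<forall>x\<in>B'. \<exists>c. A *v x = c *\<^sub>R x" "S' \<subseteq> span B'" by blast
    show ?thesis
    proof (intro exI[of _ "insert v B'"] conjI)
      show "insert v B' \<subseteq> S" using B'(1) vS by (auto simp: S'_def)
      show "pairwise orthogonal (insert v B')"
        using B'(1,2) by (auto simp: pairwise_insert S'_def orthogonal_def inner_commute)
      show "\<forall>x\<in>insert v B'. norm x = 1" using B'(3) nv by auto
      show "\<forall>x\<in>insert v B'. \<exists>c. A *v x = c *\<^sub>R x" using B'(4) ev by auto
      show "S \<subseteq> span (insert v B')"
      proof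
        fix x assume x: "x \<in> S"
        have "x - (v \<bullet> x) *\<^sub>R v \<in> S'"
          using x vS less.prems(1) vv by (simp add: S'_def subspace_diff subspace_scale inner_diff_right)
        then have "x - (v \<bullet> x) *\<^sub>R v \<in> span (insert v B')"
          using B'(5) span_mono[of B' "insert v B'"] by blast
        moreover have "(v \<bullet> x) *\<^sub>R v \<in> span (insert v B')" by (simp add: span_base span_mul)
        ultimately have "x - (v \<bullet> x) *\<^sub>R v + (v \<bullet> x) *\<^sub>R v \<in> span (insert v B')" by (rule span_add)
        then show "x \<in> span (insert v B')" by simp
      qed
    qed
  qed
qed

definition colmat :: "('n \<Rightarrow> real^'n) \<Rightarrow> real^'n^'n" where
  "colmat f = (\<chi> i j. f j $ i)"

lemma spectral:
  fixes A :: "real^'n^'n"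
  assumes symA: "transpose A = A"
  shows "\<exists>U d. orthogonal_matrix U \<and> A = U ** Diag d ** transpose U"
proof -
  obtain B where B: "pairwise orthogonal B" "\<forall>x\<in>B. norm x = 1" "\<forall>x\<in>B. \<exists>c. A *v x = c *\<^sub>R x"
    "UNIV \<subseteq> span B"
    using eigbasis_subspace[OF symA, of UNIV] by auto
  have indep: "independent B"
    using B(1,2) by (intro pairwise_orthogonal_independent) auto
  have "card B = dim (UNIV :: (real^'n) set)"
    using basis_card_eq_dim[of B UNIV] B(4) indep by auto
  then have cB: "card B = CARD('n)" by simp
  have fB: "finite B" using indep finiteI_independent by blast
  obtain f where f: "bij_betw f (UNIV::'n set) B"
    using finite_same_card_bij[of "UNIV::'n set" B] fB cB by auto
  have fB': "f i \<in> B" for i using f by (auto simp: bij_betw_def)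
  have nf: "norm (f i) = 1" for i using fB' B(2) by blast
  have of: "i \<noteq> j \<Longrightarrow> orthogonal (f i) (f j)" for i j
    using B(1) f by (auto simp: pairwise_def bij_betw_def inj_on_def)
  define U where "U = colmat f"
  have colU: "column j U = f j" for j by (simp add: U_def colmat_def column_def)
  have oU: "orthogonal_matrix U"
    by (simp add: orthogonal_matrix_orthonormal_columns colU nf of)
  define d where "d = (\<chi> j. f j \<bullet> (A *v f j))"
  have evf: "A *v f j = (d $ j) *\<^sub>R f j" for j
  proof -
    obtain c where c: "A *v f j = c *\<^sub>R f j" using B(3) fB' by blast
    have "f j \<bullet> f j = 1" using nf[of j] by (simp add: norm_eq_1)
    then have "d $ j = c" by (simp add: d_def c)
    then show ?thesis using c by simp
  qed
  have AU: "A ** U = U ** Diag d"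
  proof -
    have "(A ** U) $ i $ j = (U ** Diag d) $ i $ j" for i j
    proof -
      have "(A ** U) $ i $ j = (A *v f j) $ i"
        by (simp add: matrix_matrix_mult_def matrix_vector_mult_def U_def colmat_def)
      also have "\<dots> = d $ j * f j $ i" using evf[of j] by simp
      also have "\<dots> = (U ** Diag d) $ i $ j"
        by (simp add: matrix_matrix_mult_def Diag_def U_def colmat_def if_distrib[of "\<lambda>x. _ * x"] sum.delta' cong: if_cong)
      finally show ?thesis .
    qed
    then show ?thesis by (simp add: vec_eq_iff)
  qed
  have "A = A ** (U ** transpose U)" using oU by (simp add: orthogonal_matrix_def)
  also have "\<dots> = (A ** U) ** transpose U" by (simp add: matrix_mul_assoc)
  also have "\<dots> = U ** Diag d ** transpose U" by (simp add: AU)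
  finally show ?thesis using oU by blast
qed



definition nonincr :: "real^('n::{finite,linorder}) \<Rightarrow> bool" where
  "nonincr d \<longleftrightarrow> (\<forall>i j. i \<le> j \<longrightarrow> d $ j \<le> d $ i)"

lemma sort_perm_exists:
  fixes d :: "real^('n::{finite,linorder})"
  shows "\<exists>p. p permutes (UNIV::'n set) \<and> nonincr (perm_act p d)"
proof -
  define w :: "'n \<Rightarrow> real" where "w i = real (card {j. i < j})" for i
  have wmono: "i < j \<Longrightarrow> w j < w i" for i j
  proof -
    assume ij: "i < j"
    have "{k. j < k} \<subset> {k. i < k}" using ij by auto
    then have "card {k. j < k} < card {k. i < k}" by (rule psubset_card_mono[rotated]) simp
    then show ?thesis by (simp add: w_def)
  qed
  define F where "F p = (\<Sum>i\<in>UNIV. w i * d $ p i)" for p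
  have fin: "finite {p. p permutes (UNIV::'n set)}" by (rule finite_permutations) simp
  have ne: "{p. p permutes (UNIV::'n set)} \<noteq> {}" using permutes_id by blast
  obtain p where p: "p permutes (UNIV::'n set)" and pmax: "\<And>q. q permutes (UNIV::'n set) \<Longrightarrow> F q \<le> F p"
  proof -
    have "Max (F ` {p. p permutes (UNIV::'n set)}) \<in> F ` {p. p permutes (UNIV::'n set)}"
      using fin ne by (intro Max_in) auto
    then obtain p where p: "p permutes (UNIV::'n set)" "F p = Max (F ` {p. p permutes (UNIV::'n set)})" by auto
    have "F q \<le> F p" if "q permutes (UNIV::'n set)" for q
      unfolding p(2) using fin that by (intro Max_ge) auto
    then show ?thesis using that p(1) by blast
  qed
  have "nonincr (perm_act p d)"
    unfolding nonincr_def perm_act_def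
  proof (intro allI impI, simp, rule ccontr)
    fix i j :: 'n assume ij: "i \<le> j" and lt: "\<not> d $ p j \<le> d $ p i"
    then have ij': "i < j" using order.order_iff_strict by auto
    define q where "q = p \<circ> Transposition.transpose i j"
    have q: "q permutes (UNIV::'n set)" unfolding q_def
      by (intro permutes_compose[OF permutes_swap_id p]) auto
    have "F q - F p = (w i - w j) * (d $ p j - d $ p i)"
    proof -
      have split: "F r = w i * d $ r i + w j * d $ r j + (\<Sum>k\<in>UNIV-{i,j}. w k * d $ r k)" for r
      proof -
        have "F r = (\<Sum>k\<in>{i,j} \<union> (UNIV-{i,j}). w k * d $ r k)" by (simp add: F_def)
        also have "\<dots> = (\<Sum>k\<in>{i,j}. w k * d $ r k) + (\<Sum>k\<in>UNIV-{i,j}. w k * d $ r k)"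
          by (rule sum.union_disjoint) auto
        finally show ?thesis using ij' by simp
      qed
      have rest: "(\<Sum>k\<in>UNIV-{i,j}. w k * d $ q k) = (\<Sum>k\<in>UNIV-{i,j}. w k * d $ p k)"
        by (rule sum.cong) (auto simp: q_def Transposition.transpose_def)
      show ?thesis
        using split[of q] split[of p] rest ij'
        by (simp add: q_def Transposition.transpose_def algebra_simps)
    qed
    moreover have "(w i - w j) * (d $ p j - d $ p i) > 0"
      using wmono[OF ij'] lt by simp
    ultimately show False using pmax[OF q] by simp
  qed
  then show ?thesis using p by blast
qed

lemma conj_entry:
  "(U ** Diag d ** transpose U) $ a $ b = (\<Sum>k\<in>UNIV. U$a$k * d$k * U$b$k)"
  by (simp add: matrix_matrix_mult_def Diag_def transpose_def if_distrib[of "\<lambda>x. _ * x"] sum.delta' cong: if_cong)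

lemma reorder:
  fixes U :: "real^'n^'n"
  assumes p: "p permutes (UNIV::'n set)" and U: "orthogonal_matrix U"
  shows "orthogonal_matrix (\<chi> i j. U$i$(p j)) \<and>
    (\<chi> i j. U$i$(p j)) ** Diag (perm_act p d) ** transpose (\<chi> i j. U$i$(p j)) = U ** Diag d ** transpose U"
proof
  have col: "column j (\<chi> i j. U$i$(p j)) = column (p j) U" for j
    by (simp add: column_def)
  have inj: "p i = p j \<Longrightarrow> i = j" for i j using permutes_inj[OF p] by (auto simp: inj_def)
  show "orthogonal_matrix (\<chi> i j. U$i$(p j))"
    using U inj unfolding orthogonal_matrix_orthonormal_columns col by blast
  have "(\<Sum>k\<in>UNIV. U$a$(p k) * d$(p k) * U$b$(p k)) = (\<Sum>k\<in>UNIV. U$a$k * d$k * U$b$k)" for a b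
    using sum.reindex[of p UNIV "\<lambda>k. U$a$k * d$k * U$b$k"] permutes_inj[OF p] permutes_surj[OF p]
    by (simp add: comp_def)
  then show "(\<chi> i j. U$i$(p j)) ** Diag (perm_act p d) ** transpose (\<chi> i j. U$i$(p j)) = U ** Diag d ** transpose U"
    by (simp add: vec_eq_iff conj_entry perm_act_def)
qed

lemma spectral_sorted:
  fixes A :: "real^('n::{finite,linorder})^('n::{finite,linorder})"
  assumes symA: "transpose A = A"
  shows "\<exists>U d. nonincr d \<and> orthogonal_matrix U \<and> A = U ** Diag d ** transpose U"
proof -
  obtain U d where U: "orthogonal_matrix U" "A = U ** Diag d ** transpose U"
    using spectral[OF symA] by blast
  obtain p where p: "p permutes (UNIV::'n set)" "nonincr (perm_act p d)"
    using sort_perm_exists by blast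
  show ?thesis using reorder[OF p(1) U(1), of d] U p(2) by metis
qed



lemma adj: "(Q *v x) \<bullet> y = x \<bullet> (transpose Q *v (y::real^'n))" for Q :: "real^'m^'n"
  by (metis dot_lmul_matrix vector_transpose_matrix)

lemma orth_inner:
  fixes Q :: "real^'n^'n"
  assumes "orthogonal_matrix Q"
  shows "(transpose Q *v x) \<bullet> (transpose Q *v y) = x \<bullet> y"
proof -
  have "(transpose Q *v x) \<bullet> (transpose Q *v y) = x \<bullet> (Q *v (transpose Q *v y))"
    using adj[of "transpose Q" x] by simp
  also have "\<dots> = x \<bullet> y" using assms
    by (simp add: matrix_vector_mul_assoc orthogonal_matrix_def del: transpose_matrix_vector)
  finally show ?thesis .
qed

lemma diag_mult: "Diag d *v z = (\<chi> m. d $ m * z $ m)"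
  by (simp add: Diag_def matrix_vector_mult_def vec_eq_iff if_distrib[of "\<lambda>x. x * _"] sum.delta cong: if_cong)

lemma quad_form:
  fixes U :: "real^'n^'n"
  shows "u \<bullet> ((U ** Diag d ** transpose U) *v u) = (\<Sum>m\<in>UNIV. d $ m * ((transpose U *v u) $ m)^2)"
proof -
  have "(U ** Diag d ** transpose U) *v u = U *v (Diag d *v (transpose U *v u))"
    by (simp add: matrix_vector_mul_assoc matrix_mul_assoc del: transpose_matrix_vector)
  then have "u \<bullet> ((U ** Diag d ** transpose U) *v u) = (transpose U *v u) \<bullet> (Diag d *v (transpose U *v u))"
    by (simp only: adj transpose_transpose)
  also have "\<dots> = (\<Sum>m\<in>UNIV. d $ m * ((transpose U *v u) $ m)^2)"
    by (simp add: diag_mult inner_vec_def power2_eq_square algebra_simps)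
  finally show ?thesis .
qed

definition ortho :: "'i set \<Rightarrow> ('i \<Rightarrow> real^'n) \<Rightarrow> bool" where
  "ortho I u \<longleftrightarrow> (\<forall>i\<in>I. \<forall>j\<in>I. u i \<bullet> u j = (if i = j then 1 else 0))"

lemma bessel:
  assumes fin: "finite I" and o: "ortho I u"
  shows "(\<Sum>i\<in>I. (c \<bullet> u i)^2) \<le> c \<bullet> c"
proof -
  define s where "s = (\<Sum>i\<in>I. (c \<bullet> u i)^2)"
  define p where "p = (\<Sum>i\<in>I. (c \<bullet> u i) *\<^sub>R u i)"
  have cp: "c \<bullet> p = s" by (simp add: p_def s_def inner_sum_right power2_eq_square)
  have pp: "p \<bullet> p = s"
  proof -
    have "p \<bullet> p = (\<Sum>i\<in>I. (c \<bullet> u i) * (u i \<bullet> p))" by (simp add: p_def inner_sum_left)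
    also have "\<dots> = (\<Sum>i\<in>I. (c \<bullet> u i) * (c \<bullet> u i))"
    proof (rule sum.cong[OF refl])
      fix i assume i: "i \<in> I"
      have "u i \<bullet> p = (\<Sum>j\<in>I. (c \<bullet> u j) * (u i \<bullet> u j))" by (simp add: p_def inner_sum_right)
      also have "\<dots> = (\<Sum>j\<in>I. if j = i then c \<bullet> u j else 0)"
        using o i by (intro sum.cong) (auto simp: ortho_def)
      also have "\<dots> = c \<bullet> u i" using i fin by simp
      finally show "(c \<bullet> u i) * (u i \<bullet> p) = (c \<bullet> u i) * (c \<bullet> u i)" by simp
    qed
    finally show ?thesis by (simp add: s_def power2_eq_square)
  qed
  have "0 \<le> (c - p) \<bullet> (c - p)" by simp
  also have "\<dots> = c \<bullet> c - s" using cp pp by (simp add: inner_diff_left inner_diff_right inner_commute)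
  finally show ?thesis by (simp add: s_def)
qed

lemma weight_lemma:
  fixes w d :: "'n::finite \<Rightarrow> real"
  assumes w0: "\<And>m. 0 \<le> w m" and w1: "\<And>m. w m \<le> 1" and ws: "(\<Sum>m\<in>UNIV. w m) = real (card K)"
    and sep: "\<And>a b. a \<in> K \<Longrightarrow> b \<notin> K \<Longrightarrow> d b \<le> d a"
  shows "(\<Sum>m\<in>UNIV. d m * w m) \<le> (\<Sum>m\<in>K. d m)"
proof (cases "K = {}")
  case True
  then have "(\<Sum>m\<in>UNIV. w m) = 0" using ws by simp
  then have "\<forall>m\<in>UNIV. w m = 0" using w0 by (subst sum_nonneg_eq_0_iff[symmetric]) auto
  then show ?thesis using True by simp
next
  case False
  have finK: "finite K" by simp
  define c where "c = Min (d ` K)"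
  have cK: "a \<in> K \<Longrightarrow> c \<le> d a" for a using finK by (simp add: c_def)
  have cnK: "b \<notin> K \<Longrightarrow> d b \<le> c" for b
  proof -
    assume b: "b \<notin> K"
    have "c \<in> d ` K" unfolding c_def using finK False by (intro Min_in) auto
    then show ?thesis using sep b by auto
  qed
  have split: "(\<Sum>m\<in>UNIV. f m) = (\<Sum>m\<in>K. f m) + (\<Sum>m\<in>-K. f m)" for f :: "'n \<Rightarrow> real"
    using sum.subset_diff[of K UNIV f] by (simp add: Compl_eq_Diff_UNIV)
  have "(\<Sum>m\<in>UNIV. d m * w m) - (\<Sum>m\<in>K. d m) = (\<Sum>m\<in>K. d m * (w m - 1)) + (\<Sum>m\<in>-K. d m * w m)"
    by (simp add: split[of "\<lambda>m. d m * w m"] sum_subtractf algebra_simps)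
  also have "\<dots> \<le> (\<Sum>m\<in>K. c * (w m - 1)) + (\<Sum>m\<in>-K. c * w m)"
  proof (rule add_mono)
    show "(\<Sum>m\<in>K. d m * (w m - 1)) \<le> (\<Sum>m\<in>K. c * (w m - 1))"
      using cK w1 by (intro sum_mono) (simp add: mult_right_mono_neg)
    show "(\<Sum>m\<in>-K. d m * w m) \<le> (\<Sum>m\<in>-K. c * w m)"
      using cnK w0 by (intro sum_mono) (simp add: mult_right_mono)
  qed
  also have "\<dots> = c * ((\<Sum>m\<in>UNIV. w m) - real (card K))"
    by (simp add: split[of w] sum_subtractf sum_distrib_left[symmetric] algebra_simps)
  also have "\<dots> = 0" using ws by simp
  finally show ?thesis by simp
qed



lemma tmv_comp: "(transpose U *v x) $ m = column m U \<bullet> x" for U :: "real^'n^'n"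
  by (simp add: vector_matrix_mult_def column_def inner_vec_def mult.commute)

lemma cols_ortho:
  fixes U :: "real^'n^'n"
  assumes "orthogonal_matrix U"
  shows "ortho I (\<lambda>i. column i U)"
proof -
  have "\<And>i. norm (column i U) = 1" "\<And>i j. i \<noteq> j \<Longrightarrow> orthogonal (column i U) (column j U)"
    using assms unfolding orthogonal_matrix_orthonormal_columns by auto
  then show ?thesis by (auto simp: ortho_def orthogonal_def norm_eq_1)
qed

lemma kyfan_bound:
  fixes U :: "real^'n^'n" and u :: "'i \<Rightarrow> real^'n"
  assumes U: "orthogonal_matrix U" and A: "A = U ** Diag d ** transpose U"
    and fin: "finite I" and o: "ortho I u" and card: "card I = card K"
    and sep: "\<And>a b. a \<in> K \<Longrightarrow> b \<notin> K \<Longrightarrow> d $ b \<le> d $ a"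
  shows "(\<Sum>i\<in>I. u i \<bullet> (A *v u i)) \<le> (\<Sum>m\<in>K. d $ m)"
proof -
  define w where "w m = (\<Sum>i\<in>I. (column m U \<bullet> u i)^2)" for m
  have "(\<Sum>i\<in>I. u i \<bullet> (A *v u i)) = (\<Sum>i\<in>I. \<Sum>m\<in>UNIV. d $ m * (column m U \<bullet> u i)^2)"
    unfolding A quad_form tmv_comp ..
  also have "\<dots> = (\<Sum>m\<in>UNIV. d $ m * w m)"
    by (subst sum.swap) (simp add: w_def sum_distrib_left)
  also have "\<dots> \<le> (\<Sum>m\<in>K. d $ m)"
  proof (rule weight_lemma[where d = "\<lambda>m. d $ m"])
    show "0 \<le> w m" for m by (simp add: w_def sum_nonneg)
    show "w m \<le> 1" for m
    proof -
      have "w m \<le> column m U \<bullet> column m U" unfolding w_def by (rule bessel[OF fin o])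
      also have "\<dots> = 1" using cols_ortho[OF U, of UNIV] by (simp add: ortho_def)
      finally show ?thesis .
    qed
    show "(\<Sum>m\<in>UNIV. w m) = real (card K)"
    proof -
      have "(\<Sum>m\<in>UNIV. w m) = (\<Sum>i\<in>I. \<Sum>m\<in>UNIV. ((transpose U *v u i) $ m)^2)"
        unfolding w_def tmv_comp by (rule sum.swap)
      also have "\<dots> = (\<Sum>i\<in>I. (transpose U *v u i) \<bullet> (transpose U *v u i))"
        by (simp only: inner_vec_def power2_eq_square inner_real_def)
      also have "\<dots> = (\<Sum>i\<in>I. u i \<bullet> u i)" by (simp only: orth_inner[OF U])
      also have "\<dots> = (\<Sum>i\<in>I. 1)" using o by (intro sum.cong) (auto simp: ortho_def)
      finally show ?thesis using card by simp
    qed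
    show "\<And>a b. a \<in> K \<Longrightarrow> b \<notin> K \<Longrightarrow> d $ b \<le> d $ a" by (rule sep)
  qed
  finally show ?thesis .
qed

lemma kyfan_attain:
  fixes U :: "real^'n^'n"
  assumes U: "orthogonal_matrix U" and A: "A = U ** Diag d ** transpose U"
  shows "column i U \<bullet> (A *v column i U) = d $ i"
proof -
  have o: "column m U \<bullet> column i U = (if m = i then 1 else 0)" for m
    using cols_ortho[OF U, of UNIV] by (simp add: ortho_def)
  show ?thesis unfolding A quad_form tmv_comp o
    by (simp add: if_distrib[of "\<lambda>x. x^2"] if_distrib[of "\<lambda>x. _ * x"] cong: if_cong)
qed



type_synonym 'n mat = "real^'n^'n"

lemma decomp_sums_eq:
  fixes A :: "real^('n::{finite,linorder})^('n::{finite,linorder})"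
  assumes d: "nonincr d" and U: "orthogonal_matrix U" "A = U ** Diag d ** transpose U"
    and d': "nonincr d'" and U': "orthogonal_matrix U'" "A = U' ** Diag d' ** transpose U'"
    and K: "\<And>a b. a \<in> K \<Longrightarrow> b \<le> a \<Longrightarrow> b \<in> K"
  shows "(\<Sum>m\<in>K. d $ m) \<le> (\<Sum>m\<in>K. d' $ m)"
proof -
  have "(\<Sum>m\<in>K. d $ m) = (\<Sum>i\<in>K. column i U \<bullet> (A *v column i U))"
    using kyfan_attain[OF U] by simp
  also have "\<dots> \<le> (\<Sum>m\<in>K. d' $ m)"
  proof (rule kyfan_bound[OF U'])
    show "ortho K (\<lambda>i. column i U)" by (rule cols_ortho[OF U(1)])
    show "\<And>a b. a \<in> K \<Longrightarrow> b \<notin> K \<Longrightarrow> d' $ b \<le> d' $ a"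
      using d' K unfolding nonincr_def by (meson linear)
  qed simp_all
  finally show ?thesis .
qed

lemma decomp_unique:
  fixes A :: "real^('n::{finite,linorder})^('n::{finite,linorder})"
  assumes d: "nonincr d" and U: "orthogonal_matrix U" "A = U ** Diag d ** transpose U"
    and d': "nonincr d'" and U': "orthogonal_matrix U'" "A = U' ** Diag d' ** transpose U'"
  shows "d = d'"
proof -
  have eq: "(\<Sum>m\<in>K. d $ m) = (\<Sum>m\<in>K. d' $ m)" if hK: "\<And>a b. a \<in> K \<Longrightarrow> b \<le> a \<Longrightarrow> b \<in> K" for K
  proof -
    have "(\<Sum>m\<in>K. d $ m) \<le> (\<Sum>m\<in>K. d' $ m)"
      by (rule decomp_sums_eq[OF d U d' U']) (rule hK)
    moreover have "(\<Sum>m\<in>K. d' $ m) \<le> (\<Sum>m\<in>K. d $ m)"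
      by (rule decomp_sums_eq[OF d' U' d U]) (rule hK)
    ultimately show ?thesis by linarith
  qed
  have "d $ j = d' $ j" for j
  proof -
    have "(\<Sum>m\<in>{..j}. d $ m) = (\<Sum>m\<in>{..j}. d' $ m)" by (rule eq) auto
    moreover have "(\<Sum>m\<in>{..<j}. d $ m) = (\<Sum>m\<in>{..<j}. d' $ m)" by (rule eq) auto
    moreover have "{..j} = insert j {..<j}" by auto
    ultimately show ?thesis by simp
  qed
  then show ?thesis by (simp add: vec_eq_iff)
qed

lemma eigvec_spec:
  fixes A :: "real^('n::{finite,linorder})^('n::{finite,linorder})"
  assumes symA: "transpose A = A"
  shows "nonincr (eigvec A) \<and> (\<exists>U. orthogonal_matrix U \<and> A = U ** Diag (eigvec A) ** transpose U)"
proof -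
  have ex: "\<exists>!d. nonincr d \<and> (\<exists>U. orthogonal_matrix U \<and> A = U ** Diag d ** transpose U)"
    using spectral_sorted[OF symA] decomp_unique by blast
  show ?thesis unfolding eigvec_def
    using theI'[OF ex] unfolding nonincr_def by simp
qed

lemma conj_sym:
  "transpose (U ** Diag d ** transpose U) = U ** Diag d ** transpose U"
proof -
  have "(U ** Diag d ** transpose U) $ a $ b = (U ** Diag d ** transpose U) $ b $ a" for a b
    unfolding conj_entry by (simp add: ac_simps)
  then show ?thesis by (simp add: vec_eq_iff transpose_def)
qed

lemma eigvec_eqI:
  fixes A :: "real^('n::{finite,linorder})^('n::{finite,linorder})"
  assumes "nonincr d" "orthogonal_matrix U" "A = U ** Diag d ** transpose U"
  shows "eigvec A = d"
proof -
  have symA: "transpose A = A" unfolding assms(3) by (rule conj_sym)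
  from eigvec_spec[OF symA] obtain V where "nonincr (eigvec A)" "orthogonal_matrix V" "A = V ** Diag (eigvec A) ** transpose V"
    by blast
  then show ?thesis using decomp_unique assms by blast
qed



definition dclosed :: "('n::linorder) set \<Rightarrow> bool" where
  "dclosed K \<longleftrightarrow> (\<forall>a b. a \<in> K \<longrightarrow> b \<le> a \<longrightarrow> b \<in> K)"

definition fK :: "('n::{finite,linorder}) set \<Rightarrow> real^('n::{finite,linorder})^('n::{finite,linorder}) \<Rightarrow> real" where
  "fK K A = (\<Sum>m\<in>K. eigvec A $ m)"

definition QF :: "('n::finite) set \<Rightarrow> ('n \<Rightarrow> real^'n) \<Rightarrow> real^'n^'n \<Rightarrow> real" where
  "QF K u A = (\<Sum>i\<in>K. u i \<bullet> (A *v u i))"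

lemma QF_add: "QF K u (A + B) = QF K u A + QF K u B"
  by (simp add: QF_def matrix_vector_mult_add_rdistrib inner_add_right sum.distrib)

lemma QF_diff: "QF K u (A - B) = QF K u A - QF K u B"
  by (simp add: QF_def matrix_vector_mult_diff_rdistrib inner_diff_right sum_subtractf)

lemma QF_scale: "QF K u (c *\<^sub>R A) = c * QF K u A"
  by (simp add: QF_def scaleR_matrix_vector_assoc[symmetric] sum_distrib_left)

lemma fK_max:
  assumes symA: "transpose A = A" and K: "dclosed K" and o: "ortho K u"
  shows "QF K u A \<le> fK K A"
proof -
  from eigvec_spec[OF symA] obtain U where U: "nonincr (eigvec A)" "orthogonal_matrix U"
    "A = U ** Diag (eigvec A) ** transpose U" by blast
  have sep: "\<And>a b. a \<in> K \<Longrightarrow> b \<notin> K \<Longrightarrow> eigvec A $ b \<le> eigvec A $ a"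
    using U(1) K unfolding nonincr_def dclosed_def by (meson linear)
  show ?thesis unfolding QF_def fK_def
    by (rule kyfan_bound[OF U(2,3) _ o _ sep]) simp_all
qed

lemma fK_attain:
  assumes symA: "transpose A = A"
  obtains u where "ortho K u" "fK K A = QF K u A"
proof -
  from eigvec_spec[OF symA] obtain U where U: "nonincr (eigvec A)" "orthogonal_matrix U"
    "A = U ** Diag (eigvec A) ** transpose U" by blast
  show ?thesis
  proof
    show "ortho K (\<lambda>i. column i U)" by (rule cols_ortho[OF U(2)])
    show "fK K A = QF K (\<lambda>i. column i U) A"
      unfolding fK_def QF_def using kyfan_attain[OF U(2,3)] by simp
  qed
qed

definition NN :: "'n::finite itself \<Rightarrow> real" where "NN _ = real CARD('n) * real CARD('n)"

lemma quad_bound: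
  fixes E :: "real^'n^'n"
  assumes "norm u = 1"
  shows "\<bar>u \<bullet> (E *v u)\<bar> \<le> NN TYPE('n) * norm E"
proof -
  have "\<bar>u \<bullet> (E *v u)\<bar> \<le> norm u * norm (E *v u)" by (rule Cauchy_Schwarz_ineq2)
  also have "\<dots> = norm (E *v u)" using assms by simp
  also have "\<dots> \<le> onorm ((*v) E) * norm u" by (rule onorm) simp
  also have "\<dots> = onorm ((*v) E)" using assms by simp
  also have "\<dots> \<le> (\<Sum>i\<in>UNIV. \<Sum>j\<in>UNIV. \<bar>E $ i $ j\<bar>)" by (rule onorm_le_matrix_component_sum)
  also have "\<dots> \<le> (\<Sum>i\<in>(UNIV::'n set). \<Sum>j\<in>(UNIV::'n set). norm E)"
  proof (intro sum_mono)
    fix i j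
    have "\<bar>E $ i $ j\<bar> \<le> norm (E $ i)" by (rule component_le_norm_cart)
    also have "\<dots> \<le> norm E" by (rule Finite_Cartesian_Product.norm_nth_le)
    finally show "\<bar>E $ i $ j\<bar> \<le> norm E" .
  qed
  also have "\<dots> = NN TYPE('n) * norm E" by (simp add: NN_def)
  finally show ?thesis .
qed

lemma QF_bound:
  fixes u :: "'n::finite \<Rightarrow> real^'n"
  assumes o: "ortho K u"
  shows "\<bar>QF K u E\<bar> \<le> real (card K) * NN TYPE('n) * norm E"
proof -
  have "\<bar>QF K u E\<bar> \<le> (\<Sum>i\<in>K. \<bar>u i \<bullet> (E *v u i)\<bar>)" unfolding QF_def by (rule sum_abs)
  also have "\<dots> \<le> (\<Sum>i\<in>K. NN TYPE('n) * norm E)"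
  proof (rule sum_mono)
    fix i assume "i \<in> K"
    then have "norm (u i) = 1" using o by (simp add: ortho_def norm_eq_1)
    then show "\<bar>u i \<bullet> (E *v u i)\<bar> \<le> NN TYPE('n) * norm E" by (rule quad_bound)
  qed
  also have "\<dots> = real (card K) * NN TYPE('n) * norm E" by simp
  finally show ?thesis .
qed

lemma fK_lip:
  fixes A B :: "real^('n::{finite,linorder})^('n::{finite,linorder})"
  assumes sA: "transpose A = A" and sB: "transpose B = B" and K: "dclosed K"
  shows "\<bar>fK K A - fK K B\<bar> \<le> real CARD('n) * NN TYPE('n) * norm (A - B)"
proof -
  have cK: "real (card K) * NN TYPE('n) * norm (A - B) \<le> real CARD('n) * NN TYPE('n) * norm (A - B)"
    by (intro mult_right_mono) (auto simp: NN_def card_mono)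
  have one: "fK K P - fK K R \<le> real CARD('n) * NN TYPE('n) * norm (A - B)"
    if sP: "transpose P = P" and sR: "transpose R = R" and n: "norm (P - R) = norm (A - B)" for P R :: "real^('n::{finite,linorder})^('n::{finite,linorder})"
  proof -
    obtain u where u: "ortho K u" "fK K P = QF K u P" using fK_attain[OF sP] by blast
    have "fK K P = QF K u R + QF K u (P - R)" by (simp add: u(2) QF_diff)
    also have "\<dots> \<le> fK K R + real (card K) * NN TYPE('n) * norm (P - R)"
      using fK_max[OF sR K u(1)] QF_bound[OF u(1), of "P - R"] by linarith
    finally have "fK K P \<le> fK K R + real (card K) * NN TYPE('n) * norm (A - B)" using n by simp
    then show ?thesis using cK by linarith
  qed
  show ?thesis using one[OF sA sB refl] one[OF sB sA] by (simp add: norm_minus_commute abs_le_iff)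
qed

lemma eigvec_comp:
  "eigvec A $ j = fK {..j} A - fK {..<j} A"
proof -
  have "{..j} = insert j {..<j}" by auto
  then show ?thesis by (simp add: fK_def)
qed

lemma dclosed_atMost: "dclosed {..j}" and dclosed_lessThan: "dclosed {..<j}"
  by (auto simp: dclosed_def)

definition LL :: "'n::finite itself \<Rightarrow> real" where
  "LL _ = real CARD('n) * (2 * (real CARD('n) * NN TYPE('n)))"

lemma eigvec_lip:
  fixes A B :: "real^('n::{finite,linorder})^('n::{finite,linorder})"
  assumes sA: "transpose A = A" and sB: "transpose B = B"
  shows "norm (eigvec A - eigvec B) \<le> LL TYPE('n) * norm (A - B)"
proof -
  have "norm (eigvec A - eigvec B) \<le> (\<Sum>j\<in>UNIV. \<bar>(eigvec A - eigvec B) $ j\<bar>)" by (rule norm_le_l1_cart)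
  also have "\<dots> \<le> (\<Sum>j\<in>(UNIV::'n set). 2 * (real CARD('n) * NN TYPE('n) * norm (A - B)))"
  proof (rule sum_mono)
    fix j :: 'n
    have "\<bar>(eigvec A - eigvec B) $ j\<bar> = \<bar>(fK {..j} A - fK {..j} B) - (fK {..<j} A - fK {..<j} B)\<bar>"
      by (simp add: eigvec_comp)
    also have "\<dots> \<le> \<bar>fK {..j} A - fK {..j} B\<bar> + \<bar>fK {..<j} A - fK {..<j} B\<bar>" by (rule abs_triangle_ineq4)
    also have "\<dots> \<le> 2 * (real CARD('n) * NN TYPE('n) * norm (A - B))"
      using fK_lip[OF sA sB dclosed_atMost, of j] fK_lip[OF sA sB dclosed_lessThan, of j] by linarith
    finally show "\<bar>(eigvec A - eigvec B) $ j\<bar> \<le> 2 * (real CARD('n) * NN TYPE('n) * norm (A - B))" .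
  qed
  also have "\<dots> = LL TYPE('n) * norm (A - B)" by (simp add: LL_def)
  finally show ?thesis .
qed



lemma sym_iff: "transpose A = A \<longleftrightarrow> (\<forall>i j. A $ i $ j = A $ j $ i)" for A :: "real^'n^'n"
  by (auto simp: vec_eq_iff transpose_def)

lemma sym_comb:
  fixes X H :: "real^'n^'n"
  assumes "transpose X = X" "transpose H = H"
  shows "transpose (X + t *\<^sub>R H) = X + t *\<^sub>R H"
  using assms unfolding sym_iff by simp

lemma fK_quot_mono:
  fixes X H :: "real^('n::{finite,linorder})^('n::{finite,linorder})"
  assumes sX: "transpose X = X" and sH: "transpose H = H" and K: "dclosed K"
    and s: "0 < s" and st: "s \<le> t"
  shows "(fK K (X + s *\<^sub>R H) - fK K X) / s \<le> (fK K (X + t *\<^sub>R H) - fK K X) / t"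
proof -
  have t: "0 < t" using s st by linarith
  obtain u where u: "ortho K u" "fK K (X + s *\<^sub>R H) = QF K u (X + s *\<^sub>R H)"
    using fK_attain[OF sym_comb[OF sX sH]] by blast
  define q0 where "q0 = QF K u X"
  define qH where "qH = QF K u H"
  have gs: "fK K (X + s *\<^sub>R H) = q0 + s * qH" by (simp add: u(2) QF_add QF_scale q0_def qH_def)
  have gt: "q0 + t * qH \<le> fK K (X + t *\<^sub>R H)"
    using fK_max[OF sym_comb[OF sX sH] K u(1), of t] by (simp add: QF_add QF_scale q0_def qH_def)
  have g0: "q0 \<le> fK K X" using fK_max[OF sX K u(1)] by (simp add: q0_def)
  define a where "a = s / t"
  have a0: "0 < a" and a1: "a \<le> 1" using s t st by (auto simp: a_def)
  have "a * (q0 + t * qH) + (1 - a) * q0 \<le> a * fK K (X + t *\<^sub>R H) + (1 - a) * fK K X"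
    using gt g0 a0 a1 by (intro add_mono mult_left_mono) auto
  moreover have "a * (q0 + t * qH) + (1 - a) * q0 = q0 + s * qH" using t by (simp add: a_def field_simps)
  ultimately have h: "q0 + s * qH \<le> a * fK K (X + t *\<^sub>R H) + (1 - a) * fK K X" by simp
  have e1: "a * (fK K (X + t *\<^sub>R H) - fK K X) = a * fK K (X + t *\<^sub>R H) - a * fK K X"
    by (simp add: right_diff_distrib)
  have e2: "(1 - a) * fK K X = fK K X - a * fK K X" by (simp add: left_diff_distrib)
  have "fK K (X + s *\<^sub>R H) - fK K X \<le> a * (fK K (X + t *\<^sub>R H) - fK K X)"
    using gs h e1 e2 by linarith
  then have "(fK K (X + s *\<^sub>R H) - fK K X) / s \<le> a * (fK K (X + t *\<^sub>R H) - fK K X) / s"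
    using s by (simp add: divide_right_mono)
  also have "\<dots> = (fK K (X + t *\<^sub>R H) - fK K X) / t" using s t by (simp add: a_def field_simps)
  finally show ?thesis .
qed

lemma fK_quot_lower:
  fixes X H :: "real^('n::{finite,linorder})^('n::{finite,linorder})"
  assumes sX: "transpose X = X" and sH: "transpose H = H" and K: "dclosed K" and s: "0 < s"
  shows "- (real CARD('n) * NN TYPE('n) * norm H) \<le> (fK K (X + s *\<^sub>R H) - fK K X) / s"
proof -
  have "\<bar>fK K (X + s *\<^sub>R H) - fK K X\<bar> \<le> real CARD('n) * NN TYPE('n) * norm (X + s *\<^sub>R H - X)"
    by (rule fK_lip[OF sym_comb[OF sX sH] sX K])
  also have "\<dots> = s * (real CARD('n) * NN TYPE('n) * norm H)" using s by simp
  finally have "- (s * (real CARD('n) * NN TYPE('n) * norm H)) \<le> fK K (X + s *\<^sub>R H) - fK K X" by linarith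
  then show ?thesis using s by (simp add: field_simps)
qed

lemma fK_dir:
  fixes X H :: "real^('n::{finite,linorder})^('n::{finite,linorder})"
  assumes sX: "transpose X = X" and sH: "transpose H = H" and K: "dclosed K"
  shows "\<exists>l. ((\<lambda>t. (fK K (X + t *\<^sub>R H) - fK K X) / t) \<longlongrightarrow> l) (at_right 0)"
proof -
  have "((\<lambda>t. (fK K (X + t *\<^sub>R H) - fK K X) / t) \<longlongrightarrow>
     Inf ((\<lambda>t. (fK K (X + t *\<^sub>R H) - fK K X) / t) ` ({0<..} \<inter> UNIV))) (at 0 within ({0<..} \<inter> UNIV))"
    by (rule Lim_right_bound[where K = "- (real CARD('n) * NN TYPE('n) * norm H)"])
      (auto intro: fK_quot_mono[OF sX sH K] fK_quot_lower[OF sX sH K])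
  then show ?thesis by auto
qed

lemma eigvec_dir_tendsto:
  fixes X H :: "real^('n::{finite,linorder})^('n::{finite,linorder})"
  assumes sX: "transpose X = X" and sH: "transpose H = H"
  shows "((\<lambda>t. (1 / t) *\<^sub>R (eigvec (X + t *\<^sub>R H) - eigvec X)) \<longlongrightarrow> eigvec_dir X H) (at_right 0)"
proof -
  have "\<forall>j. \<exists>l. ((\<lambda>t. (fK {..j} (X + t *\<^sub>R H) - fK {..j} X) / t
        - (fK {..<j} (X + t *\<^sub>R H) - fK {..<j} X) / t) \<longlongrightarrow> l) (at_right 0)"
  proof
    fix j :: 'n
    obtain l1 where l1: "((\<lambda>t. (fK {..j} (X + t *\<^sub>R H) - fK {..j} X) / t) \<longlongrightarrow> l1) (at_right 0)"
      using fK_dir[OF sX sH dclosed_atMost] by blast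
    obtain l0 where l0: "((\<lambda>t. (fK {..<j} (X + t *\<^sub>R H) - fK {..<j} X) / t) \<longlongrightarrow> l0) (at_right 0)"
      using fK_dir[OF sX sH dclosed_lessThan] by blast
    show "\<exists>l. ((\<lambda>t. (fK {..j} (X + t *\<^sub>R H) - fK {..j} X) / t
        - (fK {..<j} (X + t *\<^sub>R H) - fK {..<j} X) / t) \<longlongrightarrow> l) (at_right 0)"
      using tendsto_diff[OF l1 l0] by blast
  qed
  from choice[OF this] obtain L where L0: "\<forall>j. ((\<lambda>t. (fK {..j} (X + t *\<^sub>R H) - fK {..j} X) / t
        - (fK {..<j} (X + t *\<^sub>R H) - fK {..<j} X) / t) \<longlongrightarrow> L j) (at_right 0)"
    by (elim exE)
  have L: "\<And>j. ((\<lambda>t. (fK {..j} (X + t *\<^sub>R H) - fK {..j} X) / t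
        - (fK {..<j} (X + t *\<^sub>R H) - fK {..<j} X) / t) \<longlongrightarrow> L j) (at_right 0)"
    using L0 by blast
  have comp: "((1 / t) *\<^sub>R (eigvec (X + t *\<^sub>R H) - eigvec X)) $ j =
     (fK {..j} (X + t *\<^sub>R H) - fK {..j} X) / t - (fK {..<j} (X + t *\<^sub>R H) - fK {..<j} X) / t" for t j
    unfolding vector_scaleR_component vector_minus_component eigvec_comp
    by (simp add: divide_inverse algebra_simps)
  have T: "((\<lambda>t. (1 / t) *\<^sub>R (eigvec (X + t *\<^sub>R H) - eigvec X)) \<longlongrightarrow> (\<chi> j. L j)) (at_right 0)"
    by (rule vec_tendstoI) (simp only: comp vec_lambda_beta L)
  then have "eigvec_dir X H = (\<chi> j. L j)"
    unfolding eigvec_dir_def by (intro tendsto_Lim) simp_all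
  then show ?thesis using T by simp
qed



lemma conj_lin:
  fixes V :: "real^'n^'n"
  shows "c *\<^sub>R (V ** Diag a ** transpose V - V ** Diag b ** transpose V) = V ** Diag (c *\<^sub>R (a - b)) ** transpose V"
  by (simp add: vec_eq_iff conj_entry sum_subtractf sum_distrib_left algebra_simps)

lemma orth_entry_le:
  fixes V :: "real^'n^'n"
  assumes "orthogonal_matrix V"
  shows "\<bar>V $ a $ k\<bar> \<le> 1"
proof -
  have "\<bar>V $ a $ k\<bar> = \<bar>column k V $ a\<bar>" by (simp add: column_def)
  also have "\<dots> \<le> norm (column k V)" by (rule component_le_norm_cart)
  also have "\<dots> = 1" using assms unfolding orthogonal_matrix_orthonormal_columns by blast
  finally show ?thesis .
qed

lemma conj_norm:
  fixes V :: "real^'n^'n"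
  assumes V: "orthogonal_matrix V"
  shows "norm (V ** Diag e ** transpose V) \<le> real CARD('n) * real CARD('n) * real CARD('n) * norm e"
proof -
  have ent: "\<bar>(V ** Diag e ** transpose V) $ a $ b\<bar> \<le> real CARD('n) * norm e" for a b
  proof -
    have "\<bar>(V ** Diag e ** transpose V) $ a $ b\<bar> \<le> (\<Sum>k\<in>UNIV. \<bar>V $ a $ k * e $ k * V $ b $ k\<bar>)"
      unfolding conj_entry by (rule sum_abs)
    also have "\<dots> \<le> (\<Sum>k\<in>(UNIV::'n set). norm e)"
    proof (rule sum_mono)
      fix k
      have "\<bar>V $ a $ k * e $ k * V $ b $ k\<bar> = \<bar>V $ a $ k\<bar> * \<bar>e $ k\<bar> * \<bar>V $ b $ k\<bar>" by (simp add: abs_mult)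
      also have "\<dots> \<le> 1 * \<bar>e $ k\<bar> * 1"
        using orth_entry_le[OF V, of a k] orth_entry_le[OF V, of b k]
        by (intro mult_mono) auto
      also have "\<dots> \<le> norm e" by (simp add: component_le_norm_cart)
      finally show "\<bar>V $ a $ k * e $ k * V $ b $ k\<bar> \<le> norm e" .
    qed
    finally show ?thesis by simp
  qed
  define M where "M = V ** Diag e ** transpose V"
  have "norm M \<le> (\<Sum>a\<in>UNIV. norm (M $ a))"
    unfolding norm_vec_def by (rule L2_set_le_sum) simp
  also have "\<dots> \<le> (\<Sum>a\<in>(UNIV::'n set). \<Sum>b\<in>(UNIV::'n set). real CARD('n) * norm e)"
  proof (rule sum_mono)
    fix a
    have "norm (M $ a) \<le> (\<Sum>b\<in>UNIV. \<bar>M $ a $ b\<bar>)" by (rule norm_le_l1_cart)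
    also have "\<dots> \<le> (\<Sum>b\<in>(UNIV::'n set). real CARD('n) * norm e)"
      by (rule sum_mono) (simp add: M_def ent)
    finally show "norm (M $ a) \<le> (\<Sum>b\<in>(UNIV::'n set). real CARD('n) * norm e)" .
  qed
  also have "\<dots> = real CARD('n) * real CARD('n) * real CARD('n) * norm e" by simp
  finally show ?thesis by (simp add: M_def)
qed



lemma seq_at_right:
  fixes t :: "nat \<Rightarrow> real"
  assumes "\<forall>k. t k > 0" "t \<longlonglongrightarrow> 0"
  shows "filterlim t (at_right 0) sequentially"
  using assms by (intro tendsto_imp_filterlim_at_right) auto

lemma subset_dir:
  fixes X :: "real^('n::{finite,linorder})^('n::{finite,linorder})"
  assumes C: "C = {Y \<in> sym_mats. eigvec Y \<in> \<Theta>}" and XC: "X \<in> C"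
    and H: "H \<in> tangent_cone C X"
  shows "H \<in> sym_mats \<and> eigvec_dir X H \<in> tangent_cone \<Theta> (eigvec X)"
proof -
  obtain t w where t0: "\<forall>k. t k > (0::real)" and t: "t \<longlonglongrightarrow> 0" and w: "w \<longlonglongrightarrow> H"
    and wC: "\<forall>k. X + t k *\<^sub>R w k \<in> C"
    using H unfolding tangent_cone_def by blast
  have sX: "transpose X = X" using XC C by (simp add: sym_mats_def)
  have sw: "transpose (w k) = w k" for k
  proof -
    have s: "transpose (X + t k *\<^sub>R w k) = X + t k *\<^sub>R w k" using wC C by (simp add: sym_mats_def)
    show ?thesis unfolding sym_iff
    proof (intro allI)
      fix i j
      from s sX have "X $ i $ j + t k * w k $ i $ j = X $ j $ i + t k * w k $ j $ i"
        "X $ i $ j = X $ j $ i" unfolding sym_iff by (auto simp: vec_eq_iff)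
      then have "t k * w k $ i $ j = t k * w k $ j $ i" by linarith
      then show "w k $ i $ j = w k $ j $ i" using t0[rule_format, of k] by simp
    qed
  qed
  have sH: "transpose H = H" unfolding sym_iff
  proof (intro allI)
    fix i j
    have "(\<lambda>k. w k $ i $ j) \<longlonglongrightarrow> H $ i $ j" by (intro tendsto_vec_nth w)
    moreover have "(\<lambda>k. w k $ i $ j) = (\<lambda>k. w k $ j $ i)"
      using sw unfolding sym_iff by simp
    moreover have "(\<lambda>k. w k $ j $ i) \<longlonglongrightarrow> H $ j $ i" by (intro tendsto_vec_nth w)
    ultimately have "(\<lambda>k. w k $ i $ j) \<longlonglongrightarrow> H $ j $ i" by simp
    moreover have "(\<lambda>k. w k $ i $ j) \<longlonglongrightarrow> H $ i $ j" by (intro tendsto_vec_nth w)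
    ultimately show "H $ i $ j = H $ j $ i" using LIMSEQ_unique by blast
  qed
  define w2 where "w2 k = (1 / t k) *\<^sub>R (eigvec (X + t k *\<^sub>R w k) - eigvec X)" for k
  define a where "a k = (1 / t k) *\<^sub>R (eigvec (X + t k *\<^sub>R w k) - eigvec (X + t k *\<^sub>R H))" for k
  define b where "b k = (1 / t k) *\<^sub>R (eigvec (X + t k *\<^sub>R H) - eigvec X)" for k
  have w2ab: "w2 k = a k + b k" for k by (simp add: w2_def a_def b_def algebra_simps)
  have b: "b \<longlonglongrightarrow> eigvec_dir X H"
    unfolding b_def
    using filterlim_compose[OF eigvec_dir_tendsto[OF sX sH] seq_at_right[OF t0 t]] by simp
  have a: "a \<longlonglongrightarrow> 0"
  proof (rule Lim_null_comparison)
    show "\<forall>\<^sub>F k in sequentially. norm (a k) \<le> LL TYPE('n) * norm (w k - H)"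
    proof (intro always_eventually allI)
      fix k
      have "norm (eigvec (X + t k *\<^sub>R w k) - eigvec (X + t k *\<^sub>R H))
          \<le> LL TYPE('n) * norm (X + t k *\<^sub>R w k - (X + t k *\<^sub>R H))"
        by (rule eigvec_lip[OF sym_comb[OF sX sw] sym_comb[OF sX sH]])
      also have "\<dots> = t k * (LL TYPE('n) * norm (w k - H))"
        using t0[rule_format, of k] by (simp add: scaleR_diff_right[symmetric])
      finally have h: "norm (eigvec (X + t k *\<^sub>R w k) - eigvec (X + t k *\<^sub>R H)) \<le> t k * (LL TYPE('n) * norm (w k - H))" .
      have tk: "0 < t k" using t0 by blast
      have "norm (a k) = norm (eigvec (X + t k *\<^sub>R w k) - eigvec (X + t k *\<^sub>R H)) / t k"
        unfolding a_def norm_scaleR using tk by simp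
      also have "\<dots> \<le> LL TYPE('n) * norm (w k - H)" using h tk by (simp add: pos_divide_le_eq mult.commute)
      finally show "norm (a k) \<le> LL TYPE('n) * norm (w k - H)" .
    qed
    have "(\<lambda>k. w k - H) \<longlonglongrightarrow> 0" using w by (simp add: LIM_zero)
    then show "(\<lambda>k. LL TYPE('n) * norm (w k - H)) \<longlonglongrightarrow> 0"
      by (intro tendsto_mult_right_zero tendsto_norm_zero)
  qed
  have w2lim: "w2 \<longlonglongrightarrow> eigvec_dir X H"
    unfolding w2ab[abs_def] using tendsto_add[OF a b] by simp
  have w2T: "eigvec X + t k *\<^sub>R w2 k \<in> \<Theta>" for k
  proof -
    have "eigvec X + t k *\<^sub>R w2 k = eigvec (X + t k *\<^sub>R w k)"
      using t0[rule_format, of k] by (simp add: w2_def)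
    then show ?thesis using wC C by simp
  qed
  have "eigvec_dir X H \<in> tangent_cone \<Theta> (eigvec X)"
    unfolding tangent_cone_def
    by (rule CollectI, rule exI[of _ t], rule exI[of _ w2]) (use t0 t w2lim w2T in simp)
  then show ?thesis using sH by (simp add: sym_mats_def)
qed



lemma supset_dir:
  fixes X :: "real^('n::{finite,linorder})^('n::{finite,linorder})"
  assumes symT: "symmetric_set \<Theta>" and C: "C = {Y \<in> sym_mats. eigvec Y \<in> \<Theta>}" and XC: "X \<in> C"
    and sH: "H \<in> sym_mats" and D: "eigvec_dir X H \<in> tangent_cone \<Theta> (eigvec X)"
  shows "H \<in> tangent_cone C X"
proof -
  have sX: "transpose X = X" using XC C by (simp add: sym_mats_def)
  have sH': "transpose H = H" using sH by (simp add: sym_mats_def)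
  obtain t d where t0: "\<forall>k. t k > (0::real)" and t: "t \<longlonglongrightarrow> 0" and d: "d \<longlonglongrightarrow> eigvec_dir X H"
    and dT: "\<forall>k. eigvec X + t k *\<^sub>R d k \<in> \<Theta>"
    using D unfolding tangent_cone_def by blast
  define Y where "Y k = X + t k *\<^sub>R H" for k
  have sY: "transpose (Y k) = Y k" for k unfolding Y_def by (rule sym_comb[OF sX sH'])
  have "\<forall>k. \<exists>V. orthogonal_matrix V \<and> Y k = V ** Diag (eigvec (Y k)) ** transpose V"
  proof
    fix k show "\<exists>V. orthogonal_matrix V \<and> Y k = V ** Diag (eigvec (Y k)) ** transpose V"
      using eigvec_spec[OF sY[of k]] by (elim conjE)
  qed
  from choice[OF this] obtain V where V0: "\<forall>k. orthogonal_matrix (V k) \<and> Y k = V k ** Diag (eigvec (Y k)) ** transpose (V k)"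
    by (elim exE)
  have V: "\<And>k. orthogonal_matrix (V k)" "\<And>k. Y k = V k ** Diag (eigvec (Y k)) ** transpose (V k)"
    using V0 by auto
  define v where "v k = eigvec X + t k *\<^sub>R d k" for k
  define Z where "Z k = V k ** Diag (v k) ** transpose (V k)" for k
  have ZC: "Z k \<in> C" for k
  proof -
    obtain p where p: "p permutes (UNIV::'n set)" "nonincr (perm_act p (v k))"
      using sort_perm_exists by blast
    define U' where "U' = (\<chi> i j. V k $ i $ (p j))"
    have R: "orthogonal_matrix U'" "U' ** Diag (perm_act p (v k)) ** transpose U' = Z k"
      using reorder[OF p(1) V(1)[of k], of "v k"] unfolding U'_def Z_def by auto
    have "eigvec (Z k) = perm_act p (v k)"
      by (rule eigvec_eqI[OF p(2) R(1)]) (simp add: R(2))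
    moreover have "perm_act p (v k) \<in> \<Theta>"
    proof -
      have "perm_act p (v k) \<in> perm_act p ` \<Theta>" using dT by (simp add: v_def)
      moreover have "perm_act p ` \<Theta> = \<Theta>" using symT p(1) unfolding symmetric_set_def by simp
      ultimately show ?thesis by simp
    qed
    moreover have "transpose (Z k) = Z k"
      unfolding Z_def by (rule conj_sym)
    ultimately show ?thesis using C by (simp add: sym_mats_def)
  qed
  define w where "w k = (1 / t k) *\<^sub>R (Z k - X)" for k
  have wZ: "X + t k *\<^sub>R w k = Z k" for k using t0[rule_format, of k] by (simp add: w_def)
  have wH: "w k - H = (1 / t k) *\<^sub>R (Z k - Y k)" for k
    using t0[rule_format, of k] by (simp add: w_def Y_def algebra_simps)
  have key: "(1 / t k) *\<^sub>R (v k - eigvec (Y k)) = d k - (1 / t k) *\<^sub>R (eigvec (X + t k *\<^sub>R H) - eigvec X)" for k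
    using t0[rule_format, of k] by (simp add: v_def Y_def algebra_simps)
  have e: "(\<lambda>k. (1 / t k) *\<^sub>R (v k - eigvec (Y k))) \<longlonglongrightarrow> 0"
  proof -
    have "(\<lambda>k. (1 / t k) *\<^sub>R (eigvec (X + t k *\<^sub>R H) - eigvec X)) \<longlonglongrightarrow> eigvec_dir X H"
      using filterlim_compose[OF eigvec_dir_tendsto[OF sX sH'] seq_at_right[OF t0 t]] by simp
    from tendsto_diff[OF d this] show ?thesis unfolding key by simp
  qed
  have wlim: "(\<lambda>k. w k - H) \<longlonglongrightarrow> 0"
  proof (rule Lim_null_comparison)
    show "\<forall>\<^sub>F k in sequentially. norm (w k - H) \<le> real CARD('n) * real CARD('n) * real CARD('n) * norm ((1 / t k) *\<^sub>R (v k - eigvec (Y k)))"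
    proof (intro always_eventually allI)
      fix k
      have "w k - H = V k ** Diag ((1 / t k) *\<^sub>R (v k - eigvec (Y k))) ** transpose (V k)"
        unfolding wH conj_lin[symmetric] Z_def using V(2)[of k] by simp
      then show "norm (w k - H) \<le> real CARD('n) * real CARD('n) * real CARD('n) * norm ((1 / t k) *\<^sub>R (v k - eigvec (Y k)))"
        using conj_norm[OF V(1)[of k], of "(1 / t k) *\<^sub>R (v k - eigvec (Y k))"] by (simp only:)
    qed
    show "(\<lambda>k. real CARD('n) * real CARD('n) * real CARD('n) * norm ((1 / t k) *\<^sub>R (v k - eigvec (Y k)))) \<longlonglongrightarrow> 0"
      by (intro tendsto_mult_right_zero tendsto_norm_zero e)
  qed
  then have "w \<longlonglongrightarrow> H" by (simp add: LIM_zero_iff)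
  then show ?thesis unfolding tangent_cone_def
    by (intro CollectI exI[of _ t] exI[of _ w]) (simp add: t0 t wZ ZC)
qed

theorem corollary3p6:
  fixes \<Theta> :: "(real ^ ('n::{finite,linorder})) set"
    and C :: "(real ^ ('n::{finite,linorder}) ^ ('n::{finite,linorder})) set"
    and X :: "real ^ ('n::{finite,linorder}) ^ ('n::{finite,linorder})"
  assumes "symmetric_set \<Theta>"
    and "C = {Y \<in> sym_mats. eigvec Y \<in> \<Theta>}"
    and "X \<in> C"
  shows "tangent_cone C X = {H \<in> sym_mats. eigvec_dir X H \<in> tangent_cone \<Theta> (eigvec X)}"
proof (intro set_eqI iffI)
  fix H assume "H \<in> tangent_cone C X"
  then show "H \<in> {H \<in> sym_mats. eigvec_dir X H \<in> tangent_cone \<Theta> (eigvec X)}"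
    using subset_dir[OF assms(2,3)] by simp
next
  fix H assume "H \<in> {H \<in> sym_mats. eigvec_dir X H \<in> tangent_cone \<Theta> (eigvec X)}"
  then show "H \<in> tangent_cone C X" using supset_dir[OF assms] by simp
qed

end
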